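(* Let $\varepsilon>0$ and let $\mathcal{A}\subseteq\mathcal{Z}$ with $z^\star\in\mathcal{A}$ be such that $\Delta_z:=(z^\star-z)^\top\theta^\star\le4\varepsilon$ for every $z\in\mathcal{A}\setminus\{z^\star\}$. Then $$\mathcal{V}^\star_{\mathrm{lin}}(\mathcal{A}:\mathcal{X}-x_1)\le 64\,\boldsymbol\tau^\star_{\mathrm{lin}}(\mathcal{Z}:\mathcal{X}-x_1)\,\varepsilon^2.$$ Consequently, if $\mathbf q\in\Delta^{(K)}$ is arbitrary and $\mathbf p=\tfrac12(\mathbf p_{\mathrm{xor}}(\mathcal{A})+\mathbf q)$, then $\mathcal{V}_{\mathrm{cov}}(\mathcal{A}:\mathcal{X},\mathbf p)\le 512\,\boldsymbol\tau^\star_{\mathrm{lin}}(\mathcal{Z}:\mathcal{X}-x_1)\,\varepsilon^2$.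
   Context: $\mathcal{X}=\{x_1,\dots,x_K\}\subset\mathbb{R}^d$, $\mathcal{Z}\subset\mathbb{R}^d$ finite, $\theta^\star\in\mathbb{R}^d$, $z^\star$ the unique maximizer of $z^\top\theta^\star$ over $\mathcal{Z}$. $\Delta^{(K)}$ is the probability simplex on $[K]$. For $\mathbf p\in\Delta^{(K)}$: $\bar x_{\mathbf p}:=\sum_ip_ix_i$, $\mathbf\Sigma_{\mathrm{cov},\mathbf p}:=\sum_ip_i(x_i-\bar x_{\mathbf p})(x_i-\bar x_{\mathbf p})^\top$, $\mathbf\Sigma_{-1,\mathbf p}:=\sum_ip_i(x_i-x_1)(x_i-x_1)^\top$. For PSD $\mathbf A$, $\|y\|_{\mathbf A^{-1}}:=\lim_{\lambda\to0^+}\sqrt{y^\top(\mathbf A+\lambda\mathbf I_d)^{-1}y}$ (possibly $+\infty$). $\boldsymbol\tau^\star_{\mathrm{lin}}(\mathcal{Z}:\mathcal{X}-x_1):=\min_{\mathbf p\in\Delta^{(K)}}\max_{z\in\mathcal{Z}\setminus\{z^\star\}}\|z^\star-z\|^2_{\mathbf\Sigma_{-1,\mathbf p}^{-1}}/((z^\star-z)^\top\theta^\star)^2$. $\mathcal{V}_{\mathrm{cov}}(\mathcal{A}:\mathcal{X},\mathbf p):=\max_{u,u'\in\mathcal{A}}\|u-u'\|^2_{\mathbf\Sigma_{\mathrm{cov},\mathbf p}^{-1}}$; $\mathcal{V}^\star_{\mathrm{lin}}(\mathcal{A}:\mathcal{X}-x_1):=\min_{\mathbf p\in\Delta^{(K)}}\max_{u,u'\in\mathcal{A}}\|u-u'\|^2_{\mathbf\Sigma_{-1,\mathbf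 p}^{-1}}$. $\mathbf p_{\mathrm{xor}}(\mathcal{A}):=(\tfrac12,\tfrac12\tilde p_2,\dots,\tfrac12\tilde p_K)$, where $\tilde{\mathbf p}\in\Delta^{(K)}$ is a minimizer in the definition of $\mathcal{V}^\star_{\mathrm{lin}}(\mathcal{A}:\mathcal{X}-x_1)$ with $\tilde p_1=0$. *)

theory Defs
  imports "HOL-Analysis.Analysis"
begin

text \<open>Vectors in R^d are \<open>real^'d\<close>; d x d matrices are \<open>real^'d^'d\<close>.
  The arms x_1..x_K are \<open>x :: nat \<Rightarrow> real^'d\<close> indexed by {1..K}.\<close>

definition outer :: "real^'d \<Rightarrow> real^'d \<Rightarrow> real^'d^'d" where
  "outer u v = (\<chi> i j. u $ i * v $ j)"

text \<open>Squared generalized inverse norm: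
  ||y||^2_{A^{-1}} = lim_{lambda -> 0+} y^T (A + lambda I)^{-1} y, in extended reals.\<close>
definition inv_normsq :: "real^'d^'d \<Rightarrow> real^'d \<Rightarrow> ereal" where
  "inv_normsq A y =
     Lim (at_right 0) (\<lambda>lam::real. ereal (y \<bullet> (matrix_inv (A + lam *\<^sub>R mat 1) *v y)))"

definition prob_simplex :: "nat \<Rightarrow> (nat \<Rightarrow> real) set" where
  "prob_simplex K = {p. (\<forall>i\<in>{1..K}. 0 \<le> p i) \<and> (\<Sum>i\<in>{1..K}. p i) = 1}"

definition xbar :: "nat \<Rightarrow> (nat \<Rightarrow> real^'d) \<Rightarrow> (nat \<Rightarrow> real) \<Rightarrow> real^'d" where
  "xbar K x p = (\<Sum>i\<in>{1..K}. p i *\<^sub>R x i)"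

definition Sigma_cov :: "nat \<Rightarrow> (nat \<Rightarrow> real^'d) \<Rightarrow> (nat \<Rightarrow> real) \<Rightarrow> real^'d^'d" where
  "Sigma_cov K x p = (\<Sum>i\<in>{1..K}. p i *\<^sub>R outer (x i - xbar K x p) (x i - xbar K x p))"

definition Sigma_m1 :: "nat \<Rightarrow> (nat \<Rightarrow> real^'d) \<Rightarrow> (nat \<Rightarrow> real) \<Rightarrow> real^'d^'d" where
  "Sigma_m1 K x p = (\<Sum>i\<in>{1..K}. p i *\<^sub>R outer (x i - x 1) (x i - x 1))"

text \<open>Maximum of a family of nonnegative extended reals; the maximum over an
  empty index set is taken to be 0 (convention).\<close>
definition maxnn :: "ereal set \<Rightarrow> ereal" where
  "maxnn S = Sup (insert 0 S)"

definition tau_lin :: "nat \<Rightarrow> (nat \<Rightarrow> real^'d) \<Rightarrow> (real^'d) set \<Rightarrow> real^'d \<Rightarrow> real^'d \<Rightarrow> ereal" where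
  "tau_lin K x Z zs th =
     (INF p\<in>prob_simplex K. maxnn ((\<lambda>z. inv_normsq (Sigma_m1 K x p) (zs - z)
                                  / ereal (((zs - z) \<bullet> th)\<^sup>2)) ` (Z - {zs})))"

definition V_cov :: "nat \<Rightarrow> (nat \<Rightarrow> real^'d) \<Rightarrow> (real^'d) set \<Rightarrow> (nat \<Rightarrow> real) \<Rightarrow> ereal" where
  "V_cov K x A p = maxnn ((\<lambda>(u,u'). inv_normsq (Sigma_cov K x p) (u - u')) ` (A \<times> A))"

definition V_lin_obj :: "nat \<Rightarrow> (nat \<Rightarrow> real^'d) \<Rightarrow> (real^'d) set \<Rightarrow> (nat \<Rightarrow> real) \<Rightarrow> ereal" where
  "V_lin_obj K x A p = maxnn ((\<lambda>(u,u'). inv_normsq (Sigma_m1 K x p) (u - u')) ` (A \<times> A))"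

definition V_lin :: "nat \<Rightarrow> (nat \<Rightarrow> real^'d) \<Rightarrow> (real^'d) set \<Rightarrow> ereal" where
  "V_lin K x A = (INF p\<in>prob_simplex K. V_lin_obj K x A p)"

text \<open>p_xor built from a minimizer ptilde (with ptilde 1 = 0).\<close>
definition p_xor :: "(nat \<Rightarrow> real) \<Rightarrow> nat \<Rightarrow> real" where
  "p_xor pt i = (if i = 1 then 1/2 else pt i / 2)"

end

theory Submission
  imports Defs
begin


lemma outer_mv: "outer u u *v w = (u \<bullet> w) *\<^sub>R u"
  by (simp add: vec_eq_iff matrix_vector_mult_def outer_def inner_vec_def sum_distrib_left mult.commute mult.left_commute)

lemma smv: "((c::real) *\<^sub>R M) *v (w::real^'n) = c *\<^sub>R (M *v w)"
  by (simp add: vec_eq_iff matrix_vector_mult_def sum_distrib_left mult.assoc)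

lemma mv_outer_sum:
  assumes "finite I"
  shows "(\<Sum>i\<in>I. c i *\<^sub>R outer (u i) (u i)) *v w = (\<Sum>i\<in>I. (c i * (u i \<bullet> w)) *\<^sub>R u i)"
  using assms
proof (induction I rule: finite_induct)
  case empty
  then show ?case by (simp add: vec_eq_iff matrix_vector_mult_def)
next
  case (insert a F)
  then show ?case by (simp add: matrix_vector_mult_add_rdistrib smv outer_mv)
qed

lemma mv_id: "(S + lam *\<^sub>R mat 1) *v w = S *v w + lam *\<^sub>R (w::real^'n)"
  by (simp add: matrix_vector_mult_add_rdistrib smv)



definition psdsym :: "real^'n^'n \<Rightarrow> bool" where
  "psdsym S \<longleftrightarrow> (\<forall>v w. v \<bullet> (S *v w) = w \<bullet> (S *v v)) \<and> (\<forall>v. 0 \<le> v \<bullet> (S *v v))"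

lemma quad_outer_sum:
  assumes "finite I"
  shows "v \<bullet> ((\<Sum>i\<in>I. c i *\<^sub>R outer (u i) (u i)) *v w) = (\<Sum>i\<in>I. c i * (u i \<bullet> w) * (u i \<bullet> v))"
  by (simp add: mv_outer_sum[OF assms] inner_sum_right inner_commute)

lemma psdsym_outer_sum:
  assumes "finite I" "\<forall>i\<in>I. 0 \<le> c i"
  shows "psdsym (\<Sum>i\<in>I. c i *\<^sub>R outer (u i) (u i))"
  unfolding psdsym_def quad_outer_sum[OF assms(1)]
proof (intro conjI allI)
  fix v w show "(\<Sum>i\<in>I. c i * (u i \<bullet> w) * (u i \<bullet> v)) = (\<Sum>i\<in>I. c i * (u i \<bullet> v) * (u i \<bullet> w))"
    by (simp add: mult_ac)
next
  fix v show "0 \<le> (\<Sum>i\<in>I. c i * (u i \<bullet> v) * (u i \<bullet> v))"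
    using assms(2) by (intro sum_nonneg) (simp add: mult.assoc)
qed

lemma mv_scale: "(M::real^'n^'n) *v (c *\<^sub>R v) = c *\<^sub>R (M *v v)"
  by (simp add: vec_eq_iff matrix_vector_mult_def sum_distrib_left mult_ac)

lemma var_ineq:
  fixes M :: "real^'n^'n"
  assumes sym: "\<forall>v w. v \<bullet> (M *v w) = w \<bullet> (M *v v)" and psd: "\<forall>v. 0 \<le> v \<bullet> (M *v v)"
    and Mw: "M *v w = y"
  shows "2*(v \<bullet> y) - v \<bullet> (M *v v) \<le> y \<bullet> w"
proof -
  have "0 \<le> (v - w) \<bullet> (M *v (v - w))" using psd by blast
  also have "\<dots> = v \<bullet> (M *v v) - v \<bullet> (M *v w) - w \<bullet> (M *v v) + w \<bullet> (M *v w)"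
    by (simp add: matrix_vector_mult_diff_distrib inner_diff_left inner_diff_right)
  also have "\<dots> = v \<bullet> (M *v v) - 2 * (v \<bullet> y) + y \<bullet> w"
    using sym Mw by (simp add: inner_commute)
  finally show ?thesis by simp
qed

lemma inv_right:
  fixes S :: "real^'n^'n"
  assumes "psdsym S" "0 < lam"
  shows "(S + lam *\<^sub>R mat 1) *v (matrix_inv (S + lam *\<^sub>R mat 1) *v y) = y"
proof -
  let ?M = "S + lam *\<^sub>R mat 1"
  have "\<forall>v. ?M *v v = 0 \<longrightarrow> v = 0"
  proof (intro allI impI)
    fix v assume "?M *v v = 0"
    then have "v \<bullet> (?M *v v) = 0" by simp
    then have "v \<bullet> (S *v v) + lam * (v \<bullet> v) = 0" by (simp add: mv_id inner_add_right)
    moreover have "0 \<le> v \<bullet> (S *v v)" using assms(1) unfolding psdsym_def by blast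
    moreover have "0 \<le> v \<bullet> v" by simp
    ultimately have "lam * (v \<bullet> v) = 0" using assms(2)
      by (smt (verit) mult_nonneg_nonneg)
    then show "v = 0" using assms(2) by simp
  qed
  then have "invertible ?M" using matrix_left_invertible_ker invertible_left_inverse by blast
  then have "\<exists>A'. ?M ** A' = mat 1 \<and> A' ** ?M = mat 1" unfolding invertible_def .
  then have "?M ** matrix_inv ?M = mat 1" unfolding matrix_inv_def by (rule someI2_ex) blast
  then show ?thesis by (simp add: matrix_vector_mul_assoc)
qed

definition Gsup :: "real^'n^'n \<Rightarrow> real^'n \<Rightarrow> ereal" where
  "Gsup S y = (SUP v. ereal (2*(v \<bullet> y) - v \<bullet> (S *v v)))"

lemma inv_normsq_Gsup:
  fixes S :: "real^'n^'n"
  assumes ps: "psdsym S"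
  shows "inv_normsq S y = Gsup S y"
proof -
  define F where "F lam = y \<bullet> (matrix_inv (S + lam *\<^sub>R mat 1) *v y)" for lam
  have lower: "2*(v \<bullet> y) - v \<bullet> (S *v v) - lam * (v \<bullet> v) \<le> F lam" if "0 < lam" for lam v
  proof -
    let ?M = "S + lam *\<^sub>R mat 1"
    have "2*(v \<bullet> y) - v \<bullet> (?M *v v) \<le> F lam" unfolding F_def
      by (rule var_ineq) (use ps that inv_right in \<open>auto simp: psdsym_def mv_id inner_add_right inner_commute\<close>)
    then show ?thesis by (simp add: mv_id inner_add_right)
  qed
  have upper: "ereal (F lam) \<le> Gsup S y" if "0 < lam" for lam
  proof -
    let ?M = "S + lam *\<^sub>R mat 1"
    define w where "w = matrix_inv ?M *v y"
    have Mw: "?M *v w = y" unfolding w_def using inv_right[OF ps that] .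
    have "F lam = y \<bullet> w" unfolding F_def w_def ..
    also have "\<dots> = 2*(w \<bullet> y) - w \<bullet> (?M *v w)" using Mw by (simp add: inner_commute)
    also have "\<dots> = 2*(w \<bullet> y) - w \<bullet> (S *v w) - lam * (w \<bullet> w)" by (simp add: mv_id inner_add_right)
    also have "\<dots> \<le> 2*(w \<bullet> y) - w \<bullet> (S *v w)" using that by simp
    finally have "ereal (F lam) \<le> ereal (2*(w \<bullet> y) - w \<bullet> (S *v w))" by simp
    also have "\<dots> \<le> Gsup S y" unfolding Gsup_def by (rule SUP_upper) simp
    finally show ?thesis .
  qed
  have "((\<lambda>lam. ereal (F lam)) \<longlongrightarrow> Gsup S y) (at_right 0)"
  proof (rule order_tendstoI)
    fix a assume "a < Gsup S y"
    then obtain v where av: "a < ereal (2*(v \<bullet> y) - v \<bullet> (S *v v))"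
      unfolding Gsup_def by (auto simp: less_SUP_iff)
    show "\<forall>\<^sub>F lam in at_right 0. a < ereal (F lam)"
    proof (cases a)
      case (real r)
      define d where "d = 2*(v \<bullet> y) - v \<bullet> (S *v v) - r"
      have d: "0 < d" using av real d_def by simp
      have "\<forall>\<^sub>F lam in at_right 0. lam \<in> {0<..<d / (v \<bullet> v + 1)}"
        by (rule eventually_at_right_real) (use d in \<open>simp add: add_nonneg_pos\<close>)
      then show ?thesis
      proof (rule eventually_mono)
        fix lam assume "lam \<in> {0<..<d / (v \<bullet> v + 1)}"
        then have l0: "0 < lam" and l1: "lam * (v \<bullet> v + 1) < d"
          by (auto simp: less_divide_eq add_nonneg_pos)
        have "lam * (v \<bullet> v) < d" using l1 l0 by (simp add: distrib_left)
        then have "r < 2*(v \<bullet> y) - v \<bullet> (S *v v) - lam * (v \<bullet> v)" unfolding d_def by simp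
        also have "\<dots> \<le> F lam" using lower[OF l0] .
        finally show "a < ereal (F lam)" using real by simp
      qed
    next
      case PInf then show ?thesis using av by simp
    next
      case MInf then show ?thesis by simp
    qed
  next
    fix a assume a: "Gsup S y < a"
    show "\<forall>\<^sub>F lam in at_right 0. ereal (F lam) < a"
      using eventually_at_right_less[of "0::real"]
      by (rule eventually_mono) (use upper a in \<open>auto intro: le_less_trans\<close>)
  qed
  then have "Lim (at_right 0) (\<lambda>lam. ereal (F lam)) = Gsup S y"
    by (intro tendsto_Lim) simp_all
  then show ?thesis unfolding inv_normsq_def F_def .
qed



lemma mv_neg: "(M::real^'n^'n) *v (- v) = - (M *v v)"
  using mv_scale[of M "-1" v] by simp

lemma Gsup_nonneg: "0 \<le> Gsup S y"
  unfolding Gsup_def by (rule SUP_upper2[of 0]) simp_all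

lemma Gsup_zero: "psdsym S \<Longrightarrow> Gsup S 0 = 0"
  unfolding Gsup_def psdsym_def
  by (intro antisym SUP_least) (auto intro: SUP_upper2[of 0])

lemma Gsup_diff: fixes S :: "real^'n^'n" shows "Gsup S (a - b) \<le> 2 * Gsup S a + 2 * Gsup S b"
  unfolding Gsup_def
proof (rule SUP_least)
  fix v :: "real^'n"
  let ?g = "\<lambda>y v. 2*(v \<bullet> y) - v \<bullet> (S *v v)"
  have "?g (a - b) v = 2 * ?g a ((1/2) *\<^sub>R v) + 2 * ?g b ((-1/2) *\<^sub>R v)"
    by (simp add: mv_scale mv_neg inner_diff_right algebra_simps)
  then have "ereal (?g (a - b) v) = 2 * ereal (?g a ((1/2) *\<^sub>R v)) + 2 * ereal (?g b ((-1/2) *\<^sub>R v))"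
    by simp
  also have "\<dots> \<le> 2 * (SUP v. ereal (?g a v)) + 2 * (SUP v. ereal (?g b v))"
    by (intro add_mono ereal_mult_left_mono SUP_upper) simp_all
  finally show "ereal (?g (a - b) v) \<le> 2 * (SUP v. ereal (?g a v)) + 2 * (SUP v. ereal (?g b v))" .
qed

lemma Gsup_scale:
  fixes S T :: "real^'n^'n"
  assumes c: "0 < c" and le: "\<forall>v. c * (v \<bullet> (T *v v)) \<le> v \<bullet> (S *v v)"
  shows "Gsup S y \<le> ereal (1/c) * Gsup T y"
  unfolding Gsup_def
proof (rule SUP_least)
  fix v :: "real^'n"
  have "2*(v \<bullet> y) - v \<bullet> (S *v v) \<le> 2*(v \<bullet> y) - c * (v \<bullet> (T *v v))" using le by (smt (verit))
  also have "\<dots> = (1/c) * (2*((c *\<^sub>R v) \<bullet> y) - (c *\<^sub>R v) \<bullet> (T *v (c *\<^sub>R v)))"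
    using c by (simp add: mv_scale field_simps power2_eq_square)
  finally have "ereal (2*(v \<bullet> y) - v \<bullet> (S *v v)) \<le> ereal (1/c) * ereal (2*((c *\<^sub>R v) \<bullet> y) - (c *\<^sub>R v) \<bullet> (T *v (c *\<^sub>R v)))"
    by simp
  also have "\<dots> \<le> ereal (1/c) * (SUP v. ereal (2*(v \<bullet> y) - v \<bullet> (T *v v)))"
    using c by (intro ereal_mult_left_mono SUP_upper) simp_all
  finally show "ereal (2*(v \<bullet> y) - v \<bullet> (S *v v)) \<le> ereal (1/c) * (SUP v. ereal (2*(v \<bullet> y) - v \<bullet> (T *v v)))" .
qed



lemma quad_real:
  fixes a :: "nat \<Rightarrow> real" and b :: real
  assumes I: "finite I" "1 \<in> I" and pt: "\<forall>i\<in>I. 0 \<le> pt i" and q: "\<forall>i\<in>I. 0 \<le> q i"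
    and pt1: "pt 1 = 0" and spt: "sum pt I = 1"
  shows "(1/8) * (\<Sum>i\<in>I. pt i * (a i - a 1)^2) \<le> (\<Sum>i\<in>I. ((p_xor pt i + q i)/2) * (a i - b)^2)"
proof -
  define X where "X i = (a i - b)^2" for i
  have "(\<Sum>i\<in>I. pt i * (a i - a 1)^2) \<le> (\<Sum>i\<in>I. pt i * (2 * X i + 2 * X 1))"
  proof (rule sum_mono)
    fix i assume "i \<in> I"
    have e: "2 * X i + 2 * X 1 - (a i - a 1)^2 = (a i + a 1 - 2*b)^2"
      unfolding X_def by (simp add: power2_eq_square algebra_simps)
    have "(a i - a 1)^2 \<le> 2 * X i + 2 * X 1"
      using e zero_le_power2[of "a i + a 1 - 2*b"] by linarith
    then show "pt i * (a i - a 1)^2 \<le> pt i * (2 * X i + 2 * X 1)"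
      using pt \<open>i \<in> I\<close> by (simp add: mult_left_mono)
  qed
  also have "(\<Sum>i\<in>I. pt i * (2 * X i + 2 * X 1)) = (\<Sum>i\<in>I. 2 * (pt i * X i) + (2 * X 1) * pt i)"
    by (rule sum.cong) (simp_all add: algebra_simps)
  also have "\<dots> = 2 * (\<Sum>i\<in>I. pt i * X i) + 2 * X 1"
    by (simp only: sum.distrib sum_distrib_left[symmetric] spt mult_1_right)
  also have "\<dots> = 8 * (\<Sum>i\<in>I. (p_xor pt i / 2) * X i)"
  proof -
    have "(\<Sum>i\<in>I. (p_xor pt i / 2) * X i) = (\<Sum>i\<in>I. (1/4) * (pt i * X i) + (if i = 1 then X 1 / 4 else 0))"
      using pt1 by (intro sum.cong) (auto simp: p_xor_def One_nat_def)
    also have "\<dots> = (\<Sum>i\<in>I. (1/4) * (pt i * X i)) + X 1 / 4"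
      using I by (simp only: sum.distrib) simp
    also have "\<dots> = (1/4) * (\<Sum>i\<in>I. pt i * X i) + X 1 / 4"
      by (simp only: sum_distrib_left[symmetric])
    finally show ?thesis by simp
  qed
  also have "\<dots> \<le> 8 * (\<Sum>i\<in>I. ((p_xor pt i + q i)/2) * X i)"
  proof -
    have "(\<Sum>i\<in>I. (p_xor pt i / 2) * X i) \<le> (\<Sum>i\<in>I. ((p_xor pt i + q i)/2) * X i)"
    proof (rule sum_mono)
      fix i assume "i \<in> I"
      then have "p_xor pt i / 2 \<le> (p_xor pt i + q i)/2" using q by simp
      moreover have "0 \<le> X i" unfolding X_def by simp
      ultimately show "(p_xor pt i / 2) * X i \<le> ((p_xor pt i + q i)/2) * X i" by (rule mult_right_mono)
    qed
    then show ?thesis by simp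
  qed
  finally show ?thesis unfolding X_def by simp
qed



lemma quad_Sigma_m1: "v \<bullet> (Sigma_m1 K x p *v v) = (\<Sum>i\<in>{1..K}. p i * ((x i - x 1) \<bullet> v)^2)"
  unfolding Sigma_m1_def by (simp add: quad_outer_sum power2_eq_square mult.assoc)

lemma quad_Sigma_cov: "v \<bullet> (Sigma_cov K x p *v v) = (\<Sum>i\<in>{1..K}. p i * ((x i - xbar K x p) \<bullet> v)^2)"
  unfolding Sigma_cov_def by (simp add: quad_outer_sum power2_eq_square mult.assoc)

lemma psd_m1: "\<forall>i\<in>{1..K}. 0 \<le> p i \<Longrightarrow> psdsym (Sigma_m1 K x p)"
  unfolding Sigma_m1_def by (rule psdsym_outer_sum) simp_all

lemma psd_cov: "\<forall>i\<in>{1..K}. 0 \<le> p i \<Longrightarrow> psdsym (Sigma_cov K x p)"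
  unfolding Sigma_cov_def by (rule psdsym_outer_sum) simp_all

lemma maxnn_nonneg: "0 \<le> maxnn S"
  unfolding maxnn_def by (rule Sup_upper) simp

lemma maxnn_upper: "a \<in> S \<Longrightarrow> a \<le> maxnn S"
  unfolding maxnn_def by (rule Sup_upper) simp

lemma maxnn_least: "0 \<le> b \<Longrightarrow> (\<And>a. a \<in> S \<Longrightarrow> a \<le> b) \<Longrightarrow> maxnn S \<le> b"
  unfolding maxnn_def by (rule Sup_least) auto

theorem mainTheorem7:
  fixes K :: nat and x :: "nat \<Rightarrow> real^'d" and Z A :: "(real^'d) set"
    and th zs :: "real^'d" and eps :: real
  assumes K: "1 \<le> K"
    and Zfin: "finite Z"
    and zsZ: "zs \<in> Z"
    and zs_max: "\<forall>z\<in>Z. z \<noteq> zs \<longrightarrow> z \<bullet> th < zs \<bullet> th"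
    and eps: "0 < eps"
    and AZ: "A \<subseteq> Z" and zsA: "zs \<in> A"
    and gap: "\<forall>z\<in>A - {zs}. (zs - z) \<bullet> th \<le> 4 * eps"
  shows "V_lin K x A \<le> 64 * tau_lin K x Z zs th * ereal (eps\<^sup>2)
         \<and> (\<forall>pt q. pt \<in> prob_simplex K \<and> pt 1 = 0 \<and> V_lin_obj K x A pt = V_lin K x A
                   \<and> q \<in> prob_simplex K
              \<longrightarrow> V_cov K x A (\<lambda>i. (p_xor pt i + q i) / 2)
                    \<le> 512 * tau_lin K x Z zs th * ereal (eps\<^sup>2))"
proof -
  define obj where "obj p = maxnn ((\<lambda>z. inv_normsq (Sigma_m1 K x p) (zs - z)
                                  / ereal (((zs - z) \<bullet> th)\<^sup>2)) ` (Z - {zs}))" for p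
  have per_p: "V_lin_obj K x A p \<le> ereal (64*eps\<^sup>2) * obj p" if p: "p \<in> prob_simplex K" for p
  proof -
    define S where "S = Sigma_m1 K x p"
    have ps: "psdsym S" unfolding S_def using p by (intro psd_m1) (simp add: prob_simplex_def)
    have objnn: "0 \<le> obj p" unfolding obj_def by (rule maxnn_nonneg)
    have C16: "0 \<le> ereal (16*eps\<^sup>2) * obj p"
      using ereal_mult_left_mono[OF objnn, of "ereal (16*eps\<^sup>2)"] by simp
    have zb: "Gsup S (zs - z) \<le> ereal (16*eps\<^sup>2) * obj p" if zA: "z \<in> A" for z
    proof (cases "z = zs")
      case True
      then show ?thesis using Gsup_zero[OF ps] C16 by simp
    next
      case False
      define D where "D = (zs - z) \<bullet> th"
      have zZ: "z \<in> Z" using zA AZ by blast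
      have D0: "0 < D" using zs_max zZ False unfolding D_def by (simp add: inner_diff_left)
      have D4: "D \<le> 4 * eps" using gap zA False unfolding D_def by blast
      have "inv_normsq S (zs - z) / ereal (D\<^sup>2) \<le> obj p"
        unfolding obj_def S_def D_def using zZ False by (intro maxnn_upper) blast
      then have "inv_normsq S (zs - z) \<le> ereal (D\<^sup>2) * obj p"
        using ereal_divide_le_pos[of "ereal (D\<^sup>2)" "inv_normsq S (zs - z)" "obj p"] D0 by simp
      also have "\<dots> \<le> ereal (16*eps\<^sup>2) * obj p"
      proof (rule ereal_mult_right_mono[OF _ objnn])
        have "D\<^sup>2 \<le> (4*eps)\<^sup>2" using D0 D4 by (intro power_mono) simp_all
        then show "ereal (D\<^sup>2) \<le> ereal (16*eps\<^sup>2)" by (simp add: power_mult_distrib)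
      qed
      finally show ?thesis using inv_normsq_Gsup[OF ps] by simp
    qed
    have sum_eq: "2 * (ereal (16*eps\<^sup>2) * obj p) + 2 * (ereal (16*eps\<^sup>2) * obj p) = ereal (64*eps\<^sup>2) * obj p"
      using objnn eps by (cases "obj p") simp_all
    show ?thesis unfolding V_lin_obj_def S_def[symmetric]
    proof (rule maxnn_least)
      show "0 \<le> ereal (64*eps\<^sup>2) * obj p"
        using ereal_mult_left_mono[OF objnn, of "ereal (64*eps\<^sup>2)"] by simp
    next
      fix a assume "a \<in> (\<lambda>(u, u'). inv_normsq S (u - u')) ` (A \<times> A)"
      then obtain u u' where uu: "u \<in> A" "u' \<in> A" and a: "a = inv_normsq S (u - u')" by auto
      have "a = Gsup S ((zs - u') - (zs - u))" using a inv_normsq_Gsup[OF ps] by simp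
      also have "\<dots> \<le> 2 * Gsup S (zs - u') + 2 * Gsup S (zs - u)" by (rule Gsup_diff)
      also have "\<dots> \<le> 2 * (ereal (16*eps\<^sup>2) * obj p) + 2 * (ereal (16*eps\<^sup>2) * obj p)"
        using uu zb by (intro add_mono ereal_mult_left_mono) simp_all
      also have "\<dots> = ereal (64*eps\<^sup>2) * obj p" by (rule sum_eq)
      finally show "a \<le> ereal (64*eps\<^sup>2) * obj p" .
    qed
  qed
  have part1: "V_lin K x A \<le> 64 * tau_lin K x Z zs th * ereal (eps\<^sup>2)"
  proof -
    have C: "0 < ereal (64*eps\<^sup>2)" "ereal (64*eps\<^sup>2) \<noteq> \<infinity>" using eps by simp_all
    have "V_lin K x A / ereal (64*eps\<^sup>2) \<le> tau_lin K x Z zs th" unfolding tau_lin_def obj_def[symmetric]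
    proof (rule INF_greatest)
      fix p assume p: "p \<in> prob_simplex K"
      have "V_lin K x A \<le> V_lin_obj K x A p" unfolding V_lin_def by (rule INF_lower) (rule p)
      also have "\<dots> \<le> ereal (64*eps\<^sup>2) * obj p" by (rule per_p[OF p])
      finally show "V_lin K x A / ereal (64*eps\<^sup>2) \<le> obj p" using ereal_divide_le_pos[OF C] by blast
    qed
    then have "V_lin K x A \<le> ereal (64*eps\<^sup>2) * tau_lin K x Z zs th" using ereal_divide_le_pos[OF C] by blast
    also have "ereal (64*eps\<^sup>2) = 64 * ereal (eps\<^sup>2)" by simp
    finally show ?thesis by (simp add: mult_ac)
  qed
  have part2: "V_cov K x A (\<lambda>i. (p_xor pt i + q i) / 2) \<le> 512 * tau_lin K x Z zs th * ereal (eps\<^sup>2)"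
    if pt: "pt \<in> prob_simplex K" and pt1: "pt 1 = 0" and ptopt: "V_lin_obj K x A pt = V_lin K x A"
      and q: "q \<in> prob_simplex K" for pt q
  proof -
    define p where "p i = (p_xor pt i + q i) / 2" for i
    have ptnn: "\<forall>i\<in>{1..K}. 0 \<le> pt i" and spt: "sum pt {1..K} = 1" using pt by (auto simp: prob_simplex_def)
    have qnn: "\<forall>i\<in>{1..K}. 0 \<le> q i" using q by (auto simp: prob_simplex_def)
    have pnn: "\<forall>i\<in>{1..K}. 0 \<le> p i" using ptnn qnn by (auto simp: p_def p_xor_def)
    define Sc where "Sc = Sigma_cov K x p"
    define Sm where "Sm = Sigma_m1 K x pt"
    have psc: "psdsym Sc" unfolding Sc_def by (rule psd_cov[OF pnn])
    have psm: "psdsym Sm" unfolding Sm_def by (rule psd_m1[OF ptnn])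
    have quad: "\<forall>v. (1/8) * (v \<bullet> (Sm *v v)) \<le> v \<bullet> (Sc *v v)"
    proof
      fix v
      have "(1/8) * (v \<bullet> (Sm *v v)) = (1/8) * (\<Sum>i\<in>{1..K}. pt i * (x i \<bullet> v - x 1 \<bullet> v)^2)"
        unfolding Sm_def quad_Sigma_m1 by (simp add: inner_diff_left)
      also have "\<dots> \<le> (\<Sum>i\<in>{1..K}. ((p_xor pt i + q i)/2) * (x i \<bullet> v - xbar K x p \<bullet> v)^2)"
        by (rule quad_real) (use K ptnn qnn pt1 spt in auto)
      also have "\<dots> = v \<bullet> (Sc *v v)"
        unfolding Sc_def quad_Sigma_cov by (simp add: inner_diff_left p_def)
      finally show "(1/8) * (v \<bullet> (Sm *v v)) \<le> v \<bullet> (Sc *v v)" .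
    qed
    have Vnn: "0 \<le> V_lin K x A" using ptopt unfolding V_lin_obj_def by (metis maxnn_nonneg)
    have "V_cov K x A p \<le> ereal 8 * V_lin K x A"
      unfolding V_cov_def Sc_def[symmetric]
    proof (rule maxnn_least)
      show "0 \<le> ereal 8 * V_lin K x A" using ereal_mult_left_mono[OF Vnn, of "ereal 8"] by simp
    next
      fix a assume "a \<in> (\<lambda>(u, u'). inv_normsq Sc (u - u')) ` (A \<times> A)"
      then obtain u u' where uu: "u \<in> A" "u' \<in> A" and a: "a = inv_normsq Sc (u - u')" by auto
      have "a = Gsup Sc (u - u')" using a inv_normsq_Gsup[OF psc] by simp
      also have "\<dots> \<le> ereal (1/(1/8)) * Gsup Sm (u - u')" by (rule Gsup_scale) (use quad in simp_all)
      also have "\<dots> = ereal 8 * inv_normsq Sm (u - u')" using inv_normsq_Gsup[OF psm] by simp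
      also have "\<dots> \<le> ereal 8 * V_lin_obj K x A pt"
        unfolding V_lin_obj_def Sm_def[symmetric]
        by (intro ereal_mult_left_mono maxnn_upper) (use uu in auto)
      finally show "a \<le> ereal 8 * V_lin K x A" using ptopt by simp
    qed
    also have "\<dots> \<le> ereal 8 * (64 * tau_lin K x Z zs th * ereal (eps\<^sup>2))"
      by (rule ereal_mult_left_mono[OF part1]) simp
    also have "\<dots> = (ereal 8 * 64) * tau_lin K x Z zs th * ereal (eps\<^sup>2)" by (simp add: mult_ac)
    also have "ereal 8 * 64 = 512" by simp
    finally show ?thesis unfolding p_def by simp
  qed
  show ?thesis using part1 part2 by blast
qed

end
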